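(* Let $a^\circ_{n,k}(1324)$ be the number of cyclic permutations $\pi\in\mathfrak S_n$ whose one-line notation avoids $\delta_k=k(k-1)\cdots21$ and such that every cyclic rotation of the cycle form $C(\pi)$ avoids $1324$. Then for $n\ge3$, $a^\circ_{n,3}(1324)=2^{n-2}$, and for $k\ge4$, $a^\circ_{n,k}(1324)=F_{2n-3}$, where $F_m$ is the $m$th Fibonacci number ($F_1=F_2=1$, $F_{m}=F_{m-1}+F_{m-2}$).
   Context: A permutation $\pi\in\mathfrak S_n$ is cyclic if it consists of a single $n$-cycle. For cyclic $\pi$, $C(\pi)=(1,c_2,\dots,c_n)$ with $c_2=\pi(1)$, $c_{i+1}=\pi(c_i)$; its cyclic rotations are the sequences $c_ic_{i+1}\cdots c_nc_1\cdots c_{i-1}$ (with $c_1=1$). A sequence avoids a pattern $\sigma\in\mathfrak S_m$ if no subsequence of length $m$ is in the same relative order as $\sigma$. The one-line notation of $\pi$ is $\pi_1\cdots\pi_n$, $\pi_i=\pi(i)$. *)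

theory Defs
  imports "HOL-Combinatorics.Permutations" "HOL-Number_Theory.Fib"
begin

definition cyclic_perm :: "nat \<Rightarrow> (nat \<Rightarrow> nat) \<Rightarrow> bool" where
  "cyclic_perm n p \<longleftrightarrow> p permutes {1..n} \<and> {1..n} \<subseteq> {(p ^^ i) 1 | i. True}"

definition one_line :: "nat \<Rightarrow> (nat \<Rightarrow> nat) \<Rightarrow> nat list" where
  "one_line n p = map p [1..<n+1]"

definition cycle_form :: "nat \<Rightarrow> (nat \<Rightarrow> nat) \<Rightarrow> nat list" where
  "cycle_form n p = map (\<lambda>i. (p ^^ i) 1) [0..<n]"

definition contains_pat :: "nat list \<Rightarrow> nat list \<Rightarrow> bool" where
  "contains_pat w \<sigma> \<longleftrightarrow> (\<exists>f :: nat \<Rightarrow> nat.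
      (\<forall>a b. a < b \<and> b < length \<sigma> \<longrightarrow> f a < f b) \<and>
      (\<forall>a < length \<sigma>. f a < length w) \<and>
      (\<forall>a b. a < length \<sigma> \<and> b < length \<sigma> \<longrightarrow> (w ! f a < w ! f b \<longleftrightarrow> \<sigma> ! a < \<sigma> ! b)))"

definition avoids :: "nat list \<Rightarrow> nat list \<Rightarrow> bool" where
  "avoids w \<sigma> \<longleftrightarrow> \<not> contains_pat w \<sigma>"

definition delta :: "nat \<Rightarrow> nat list" where
  "delta k = rev [1..<k+1]"

definition a_circ :: "nat \<Rightarrow> nat \<Rightarrow> nat" where
  "a_circ n k = card {p. cyclic_perm n p \<and> avoids (one_line n p) (delta k) \<and>
      (\<forall>j < n. avoids (rotate j (cycle_form n p)) [1,3,2,4])}"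

end

theory Submission
  imports Defs
begin

definition has213 :: "nat list \<Rightarrow> bool" where
 "has213 w \<longleftrightarrow> (\<exists>i j k. i<j \<and> j<k \<and> k<length w \<and> w!j < w!i \<and> w!i < w!k)"
definition has4132 :: "nat list \<Rightarrow> bool" where
 "has4132 w \<longleftrightarrow> (\<exists>i j k l. i<j \<and> j<k \<and> k<l \<and> l<length w \<and> w!j < w!l \<and> w!l < w!k \<and> w!k < w!i)"

definition Vs :: "nat \<Rightarrow> nat \<Rightarrow> nat list set" where
 "Vs lo m = {w. distinct w \<and> set w = {lo..<lo+m} \<and> \<not> has213 w \<and> \<not> has4132 w}"

lemma has213_Cons:
  assumes "\<forall>y\<in>set b. x < y"
  shows "has213 (x # b) \<longleftrightarrow> has213 b"
proof
  assume "has213 (x # b)"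
  then obtain i j k where h: "i<j" "j<k" "k<length (x#b)" "(x#b)!j < (x#b)!i" "(x#b)!i < (x#b)!k"
    unfolding has213_def by blast
  have "i \<noteq> 0"
  proof
    assume "i = 0"
    then have "(x#b)!j \<in> set b" using h by (cases j) auto
    then show False using h assms \<open>i=0\<close> by fastforce
  qed
  then show "has213 b" unfolding has213_def using h
    by (rule_tac x="i-1" in exI, rule_tac x="j-1" in exI, rule_tac x="k-1" in exI)
       (cases i; cases j; cases k; auto)
next
  assume "has213 b"
  then obtain i j k where h: "i<j" "j<k" "k<length b" "b!j < b!i" "b!i < b!k"
    unfolding has213_def by blast
  then show "has213 (x#b)" unfolding has213_def
    by (rule_tac x="Suc i" in exI, rule_tac x="Suc j" in exI, rule_tac x="Suc k" in exI) auto
qed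

lemma has4132_Cons:
  assumes "\<forall>y\<in>set b. x < y"
  shows "has4132 (x # b) \<longleftrightarrow> has4132 b"
proof
  assume "has4132 (x # b)"
  then obtain i j k l where h: "i<j" "j<k" "k<l" "l<length (x#b)" "(x#b)!j < (x#b)!l"
     "(x#b)!l < (x#b)!k" "(x#b)!k < (x#b)!i"
    unfolding has4132_def by blast
  have "i \<noteq> 0"
  proof
    assume "i = 0"
    then have "(x#b)!k \<in> set b" using h by (cases k) auto
    then show False using h assms \<open>i=0\<close> by fastforce
  qed
  then show "has4132 b" unfolding has4132_def using h
    by (rule_tac x="i-1" in exI, rule_tac x="j-1" in exI, rule_tac x="k-1" in exI, rule_tac x="l-1" in exI)
       (cases i; cases j; cases k; cases l; auto)
next
  assume "has4132 b"
  then obtain i j k l where h: "i<j" "j<k" "k<l" "l<length b" "b!j < b!l" "b!l < b!k" "b!k < b!i"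
    unfolding has4132_def by blast
  then show "has4132 (x#b)" unfolding has4132_def
    by (rule_tac x="Suc i" in exI, rule_tac x="Suc j" in exI, rule_tac x="Suc k" in exI,
        rule_tac x="Suc l" in exI) auto
qed

lemma has213_take: "has213 (take p w) \<Longrightarrow> has213 w"
proof -
  assume "has213 (take p w)"
  then obtain i j k where h: "i<j" "j<k" "k<length (take p w)" "take p w!j < take p w!i" "take p w!i < take p w!k"
    unfolding has213_def by blast
  then show ?thesis unfolding has213_def
    by (rule_tac x=i in exI, rule_tac x=j in exI, rule_tac x=k in exI) simp
qed

lemma has4132_take: "has4132 (take p w) \<Longrightarrow> has4132 w"
proof -
  assume "has4132 (take p w)"
  then obtain i j k l where h: "i<j" "j<k" "k<l" "l<length (take p w)" "take p w!j < take p w!l"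
    "take p w!l < take p w!k" "take p w!k < take p w!i"
    unfolding has4132_def by blast
  then show ?thesis unfolding has4132_def
    by (rule_tac x=i in exI, rule_tac x=j in exI, rule_tac x=k in exI, rule_tac x=l in exI) simp
qed

lemma has213_drop: "has213 (drop p w) \<Longrightarrow> has213 w"
proof -
  assume "has213 (drop p w)"
  then obtain i j k where h: "i<j" "j<k" "k<length (drop p w)" "drop p w!j < drop p w!i" "drop p w!i < drop p w!k"
    unfolding has213_def by blast
  then show ?thesis unfolding has213_def
    by (rule_tac x="p+i" in exI, rule_tac x="p+j" in exI, rule_tac x="p+k" in exI) simp
qed

lemma has4132_drop: "has4132 (drop p w) \<Longrightarrow> has4132 w"
proof -
  assume "has4132 (drop p w)"
  then obtain i j k l where h: "i<j" "j<k" "k<l" "l<length (drop p w)" "drop p w!j < drop p w!l"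
    "drop p w!l < drop p w!k" "drop p w!k < drop p w!i"
    unfolding has4132_def by blast
  then show ?thesis unfolding has4132_def
    by (rule_tac x="p+i" in exI, rule_tac x="p+j" in exI, rule_tac x="p+k" in exI, rule_tac x="p+l" in exI) simp
qed

lemma nth_app_blk:
  assumes "t < length a + Suc j"
  shows "(a @ [lo..<lo+j+1]) ! t = (if t < length a then a ! t else lo + (t - length a))"
  using assms by (auto simp: nth_append)

lemma has213_app:
  assumes "\<forall>y\<in>set a. lo + j < y"
  shows "has213 (a @ [lo..<lo+j+1]) \<longleftrightarrow> has213 a"
proof
  assume "has213 (a @ [lo..<lo+j+1])"
  then obtain i1 i2 i3 where h: "i1<i2" "i2<i3" "i3<length a + Suc j"
    "(a @ [lo..<lo+j+1])!i2 < (a @ [lo..<lo+j+1])!i1" "(a @ [lo..<lo+j+1])!i1 < (a @ [lo..<lo+j+1])!i3"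
    unfolding has213_def by auto
  have e: "\<And>t. t < length a \<Longrightarrow> lo + j < a ! t" using assms by auto
  show "has213 a"
  proof (cases "i3 < length a")
    case True
    then show ?thesis using h unfolding has213_def
      by (rule_tac x=i1 in exI, rule_tac x=i2 in exI, rule_tac x=i3 in exI) (simp add: nth_append)
  next
    case False
    have b1: "i1 < length a + Suc j" "i2 < length a + Suc j" using h by linarith+
    have v3: "(a @ [lo..<lo+j+1])!i3 = lo + (i3 - length a)" using nth_app_blk[OF h(3)] False by simp
    have "i1 \<ge> length a"
    proof (rule ccontr)
      assume nn: "\<not> ?thesis"
      then have "(a @ [lo..<lo+j+1])!i1 = a ! i1" by (simp add: nth_append)
      then show False using e[of i1] h(5) v3 nn h(3) by simp
    qed
    then have "(a @ [lo..<lo+j+1])!i1 = lo + (i1 - length a)" "(a @ [lo..<lo+j+1])!i2 = lo + (i2 - length a)"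
      using nth_app_blk[OF b1(1)] nth_app_blk[OF b1(2)] h(1) by auto
    then show ?thesis using h(4) h(1) \<open>i1 \<ge> length a\<close> by simp
  qed
next
  assume "has213 a"
  then obtain i1 i2 i3 where h: "i1<i2" "i2<i3" "i3<length a" "a!i2 < a!i1" "a!i1 < a!i3"
    unfolding has213_def by blast
  then show "has213 (a @ [lo..<lo+j+1])" unfolding has213_def
    by (rule_tac x=i1 in exI, rule_tac x=i2 in exI, rule_tac x=i3 in exI) (simp add: nth_append)
qed

lemma has4132_app:
  assumes "\<forall>y\<in>set a. lo + j < y"
  shows "has4132 (a @ [lo..<lo+j+1]) \<longleftrightarrow> has4132 a"
proof
  assume "has4132 (a @ [lo..<lo+j+1])"
  then obtain i1 i2 i3 i4 where h: "i1<i2" "i2<i3" "i3<i4" "i4<length a + Suc j"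
    "(a @ [lo..<lo+j+1])!i2 < (a @ [lo..<lo+j+1])!i4" "(a @ [lo..<lo+j+1])!i4 < (a @ [lo..<lo+j+1])!i3"
    "(a @ [lo..<lo+j+1])!i3 < (a @ [lo..<lo+j+1])!i1"
    unfolding has4132_def by auto
  have e: "\<And>t. t < length a \<Longrightarrow> lo + j < a ! t" using assms by auto
  have b: "i1 < length a + Suc j" "i2 < length a + Suc j" "i3 < length a + Suc j" using h by linarith+
  show "has4132 a"
  proof (cases "i4 < length a")
    case True
    then show ?thesis using h unfolding has4132_def
      by (rule_tac x=i1 in exI, rule_tac x=i2 in exI, rule_tac x=i3 in exI, rule_tac x=i4 in exI) (simp add: nth_append)
  next
    case False
    have v4: "(a @ [lo..<lo+j+1])!i4 = lo + (i4 - length a)" using nth_app_blk[OF h(4)] False by simp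
    show ?thesis
    proof (cases "i2 < length a")
      case True
      then have "(a @ [lo..<lo+j+1])!i2 = a ! i2" by (simp add: nth_append)
      then show ?thesis using e[of i2] True h(5) v4 h(4) by simp
    next
      case F2: False
      show ?thesis
      proof (cases "i3 < length a")
        case True
        then show ?thesis using F2 h(2) by simp
      next
        case False
        have "(a @ [lo..<lo+j+1])!i3 = lo + (i3 - length a)" using nth_app_blk[OF b(3)] False by simp
        then show ?thesis using v4 h(6) h(3) False by simp
      qed
    qed
  qed
next
  assume "has4132 a"
  then obtain i1 i2 i3 i4 where h: "i1<i2" "i2<i3" "i3<i4" "i4<length a" "a!i2 < a!i4" "a!i4 < a!i3" "a!i3 < a!i1"
    unfolding has4132_def by blast
  then show "has4132 (a @ [lo..<lo+j+1])" unfolding has4132_def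
    by (rule_tac x=i1 in exI, rule_tac x=i2 in exI, rule_tac x=i3 in exI, rule_tac x=i4 in exI) (simp add: nth_append)
qed

lemma has_Nil[simp]: "\<not> has213 []" "\<not> has4132 []"
  by (simp_all add: has213_def has4132_def)

lemma Vs_0: "Vs lo 0 = {[]}"
  unfolding Vs_def by auto

lemma downset_lemma:
  fixes A B :: "nat set"
  assumes "A \<union> B = {a..<a+m}" "A \<inter> B = {}" "\<forall>x\<in>A. \<forall>y\<in>B. y < x"
  shows "B = {a..<a + card B}"
proof -
  have fin: "finite B" using assms(1) by (metis finite_Un finite_atLeastLessThan)
  have sub: "B \<subseteq> {a..<a + card B}"
  proof
    fix y assume y: "y \<in> B"
    have ya: "a \<le> y" using y assms(1) by auto
    have "{a..y} \<subseteq> B"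
    proof
      fix z assume z: "z \<in> {a..y}"
      have zy: "z \<le> y" using z by simp
      have "y < a + m" using y assms(1) by auto
      then have "z \<in> A \<union> B" using assms(1) z by auto
      moreover have "z \<notin> A"
      proof
        assume "z \<in> A"
        then have "y < z" using assms(3) y by blast
        then show False using zy by simp
      qed
      ultimately show "z \<in> B" by blast
    qed
    then have "card {a..y} \<le> card B" using fin by (rule card_mono[rotated])
    then show "y \<in> {a..<a + card B}" using ya by simp
  qed
  show ?thesis using fin sub by (intro card_subset_eq) auto
qed

lemma Vs_Cons_mem:
  assumes b: "b \<in> Vs (Suc lo) m" shows "lo # b \<in> Vs lo (Suc m)"
proof -
  have db: "distinct b" and sb: "set b = {Suc lo..<Suc lo+m}" and n1: "\<not> has213 b" and n2: "\<not> has4132 b"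
    using b unfolding Vs_def by auto
  have lt: "\<forall>y\<in>set b. lo < y" using sb by simp
  have "set (lo # b) = {lo..<lo + Suc m}" using sb by auto
  moreover have "distinct (lo # b)" using db sb by simp
  ultimately show ?thesis unfolding Vs_def using has213_Cons[OF lt] has4132_Cons[OF lt] n1 n2 by simp
qed

lemma Vs_app_mem:
  assumes a: "a \<in> Vs (lo+j+1) (m-j)" and j: "j < m" shows "a @ [lo..<lo+j+1] \<in> Vs lo (Suc m)"
proof -
  have da: "distinct a" and sa: "set a = {lo+j+1..<lo+j+1+(m-j)}" and n1: "\<not> has213 a" and n2: "\<not> has4132 a"
    using a unfolding Vs_def by auto
  have lt: "\<forall>y\<in>set a. lo + j < y" using sa by simp
  have "set (a @ [lo..<lo+j+1]) = {lo..<lo + Suc m}" using sa j by auto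
  moreover have "distinct (a @ [lo..<lo+j+1])" using da sa by auto
  ultimately show ?thesis unfolding Vs_def using has213_app[OF lt] has4132_app[OF lt] n1 n2 by simp
qed

lemma Vs_Suc_sup:
  "Cons lo ` Vs (Suc lo) m \<union> (\<Union>j<m. (\<lambda>a. a @ [lo..<lo+j+1]) ` Vs (lo+j+1) (m-j)) \<subseteq> Vs lo (Suc m)"
  using Vs_Cons_mem Vs_app_mem by blast

lemma Vs_Suc_sub:
  "Vs lo (Suc m) \<subseteq> Cons lo ` Vs (Suc lo) m \<union> (\<Union>j<m. (\<lambda>a. a @ [lo..<lo+j+1]) ` Vs (lo+j+1) (m-j))"
proof
  fix w assume w: "w \<in> Vs lo (Suc m)"
  have dw: "distinct w" and sw: "set w = {lo..<lo+Suc m}" and n213: "\<not> has213 w" and n4132: "\<not> has4132 w"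
    using w by (simp_all add: Vs_def)
  have lw: "length w = Suc m" using distinct_card[OF dw] sw by simp
  have "lo \<in> set w" using sw by simp
  then obtain p where p: "p < length w" "w ! p = lo" by (auto simp: in_set_conv_nth)
  define a where "a = take p w"
  define b where "b = drop (Suc p) w"
  have wab: "w = a @ lo # b" unfolding a_def b_def using p id_take_nth_drop by metis
  have la: "length a = p" unfolding a_def using p by simp
  have dab: "distinct (a @ lo # b)" using dw wab by simp
  have "set w = set a \<union> set b \<union> {lo}" by (subst wab) auto
  then have sab: "set a \<union> set b \<union> {lo} = {lo..<lo+Suc m}" using sw by simp
  have lo_min: "\<forall>y\<in>set a \<union> set b. lo < y"
  proof
    fix y assume "y \<in> set a \<union> set b"
    then have "y \<in> {lo..<lo+Suc m}" using sab by blast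
    moreover have "y \<noteq> lo" using dab \<open>y \<in> set a \<union> set b\<close> by auto
    ultimately show "lo < y" by simp
  qed
  show "w \<in> Cons lo ` Vs (Suc lo) m \<union> (\<Union>j<m. (\<lambda>a. a @ [lo..<lo+j+1]) ` Vs (lo+j+1) (m-j))"
  proof (cases "p = 0")
    case True
    then have wb: "w = lo # b" using wab la by simp
    have lt: "\<forall>y\<in>set b. lo < y" using lo_min by auto
    have db: "distinct b" and lob: "lo \<notin> set b" using dw wb by simp_all
    have "set b = {lo..<lo+Suc m} - {lo}" using sw lob wb by auto
    also have "\<dots> = {Suc lo..<Suc lo + m}" by auto
    finally have sb: "set b = {Suc lo..<Suc lo + m}" .
    have "\<not> has213 b" using n213 has213_Cons[OF lt] wb by simp
    moreover have "\<not> has4132 b" using n4132 has4132_Cons[OF lt] wb by simp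
    ultimately have "b \<in> Vs (Suc lo) m" unfolding Vs_def using db sb by simp
    then show ?thesis using wb by blast
  next
    case False
    have wi: "\<And>i. i < p \<Longrightarrow> w ! i = a ! i" using wab la by (simp add: nth_append)
    have wk: "\<And>k. k < length b \<Longrightarrow> w ! (Suc p + k) = b ! k" using wab la by (simp add: nth_append)
    have wp: "w ! p = lo" using p by simp
    have lw2: "length w = p + Suc (length b)" using wab la by simp
    have sep: "\<forall>x\<in>set a. \<forall>y\<in>set b. y < x"
    proof (intro ballI)
      fix x y assume x: "x \<in> set a" and y: "y \<in> set b"
      obtain i where i: "i < p" "a ! i = x" using x la by (auto simp: in_set_conv_nth)
      obtain k where k: "k < length b" "b ! k = y" using y by (auto simp: in_set_conv_nth)
      have "x \<noteq> y" using x y dab by auto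
      moreover have "\<not> x < y"
      proof
        assume "x < y"
        have "has213 w" unfolding has213_def
          apply (rule exI[of _ i], rule exI[of _ p], rule exI[of _ "Suc p + k"])
          using i k wi[of i] wk[of k] wp lw2 lo_min x \<open>x < y\<close> by simp
        then show False using n213 by simp
      qed
      ultimately show "y < x" by simp
    qed
    have sortb: "sorted b"
    proof (rule sorted_iff_nth_mono_less[THEN iffD2], intro allI impI)
      fix i k assume ik: "i < k" "k < length b"
      have "b ! i \<noteq> b ! k" using dab ik by (simp add: nth_eq_iff_index_eq)
      moreover have "\<not> b ! k < b ! i"
      proof
        assume lt: "b ! k < b ! i"
        have a0: "a ! 0 \<in> set a" using False la by (simp add: nth_mem)
        have bi: "b ! i \<in> set b" "b ! k \<in> set b" using ik by simp_all
        have c1: "b ! i < a ! 0" using sep a0 bi by blast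
        have c2: "lo < b ! k" using lo_min bi by blast
        have "has4132 w" unfolding has4132_def
          apply (rule exI[of _ 0], rule exI[of _ p], rule exI[of _ "Suc p + i"], rule exI[of _ "Suc p + k"])
          using ik wi[of 0] wk[of i] wk[of k] wp lw2 lt c1 c2 False by simp
        then show False using n4132 by simp
      qed
      ultimately show "b ! i \<le> b ! k" by simp
    qed
    define j where "j = length b"
    have "lo \<notin> set a" "lo \<notin> set b" using dab by simp_all
    then have "set a \<union> set b = {lo..<lo+Suc m} - {lo}" using sab by blast
    also have "\<dots> = {Suc lo..<Suc lo + m}" by auto
    finally have abU: "set a \<union> set b = {Suc lo..<Suc lo + m}" .
    have abI: "set a \<inter> set b = {}" using dab by simp
    have cb: "card (set b) = j" using distinct_card[of b] dab unfolding j_def by simp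
    have sb: "set b = {Suc lo..<Suc lo + j}"
      using downset_lemma[OF abU abI sep] cb by simp
    have "b = [Suc lo..<Suc lo + j]"
    proof -
      have db: "distinct b" using dab by simp
      show ?thesis using sorted_distinct_set_unique[OF sortb db sorted_upt distinct_upt] sb set_upt by metis
    qed
    then have wblk: "w = a @ [lo..<lo+j+1]" using wab by (simp add: upt_rec)
    have jm: "j < m" using lw lw2 False unfolding j_def by simp
    have sa: "set a = {lo+j+1..<lo+j+1+(m-j)}"
    proof -
      have "set a = {Suc lo..<Suc lo + m} - set b" using abU abI by blast
      also have "\<dots> = {Suc lo + j..<Suc lo + m}" using sb jm by auto
      finally show ?thesis using jm by simp
    qed
    have lt: "\<forall>y\<in>set a. lo + j < y" using sa by auto
    have "a \<in> Vs (lo+j+1) (m-j)"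
    proof -
      have "\<not> has213 a" using n213 has213_app[OF lt] wblk by simp
      moreover have "\<not> has4132 a" using n4132 has4132_app[OF lt] wblk by simp
      moreover have "distinct a" using dab by simp
      ultimately show ?thesis unfolding Vs_def using sa by simp
    qed
    then show ?thesis using wblk jm by blast
  qed
qed

lemma Vs_Suc:
  "Vs lo (Suc m) = Cons lo ` Vs (Suc lo) m \<union> (\<Union>j<m. (\<lambda>a. a @ [lo..<lo+j+1]) ` Vs (lo+j+1) (m-j))"
  using Vs_Suc_sub Vs_Suc_sup by (rule antisym)

lemma Vs_finite: "finite (Vs lo m)"
proof (rule finite_subset)
  show "Vs lo m \<subseteq> {w. set w \<subseteq> {lo..<lo+m} \<and> length w = m}"
  proof
    fix w assume "w \<in> Vs lo m"
    then have "distinct w" "set w = {lo..<lo+m}" unfolding Vs_def by simp_all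
    then show "w \<in> {w. set w \<subseteq> {lo..<lo+m} \<and> length w = m}" using distinct_card[of w] by simp
  qed
  show "finite {w. set w \<subseteq> {lo..<lo+m} \<and> length w = m}"
    by (rule finite_lists_length_eq) simp
qed

lemma Vs_set: "w \<in> Vs lo m \<Longrightarrow> set w = {lo..<lo+m}"
  unfolding Vs_def by simp

lemma Vs_len: "w \<in> Vs lo m \<Longrightarrow> length w = m"
  unfolding Vs_def using distinct_card[of w] by simp

lemma fib_sum: "(\<Sum>j<m. fib (2*(m-j) - 1)) = fib (2*m)"
proof (induction m)
  case 0 then show ?case by simp
next
  case (Suc m)
  have "(\<Sum>j<Suc m. fib (2*(Suc m-j) - 1)) = fib (2*Suc m - 1) + (\<Sum>j<m. fib (2*(m-j) - 1))"
    by (subst sum.lessThan_Suc_shift) simp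
  also have "\<dots> = fib (2*m+1) + fib (2*m)" using Suc by simp
  also have "\<dots> = fib (2 * Suc m)" by simp
  finally show ?case .
qed

lemma Vs_card_Suc:
  "card (Vs lo (Suc m)) = card (Vs (Suc lo) m) + (\<Sum>j<m. card (Vs (lo+j+1) (m-j)))"
proof -
  let ?A = "Cons lo ` Vs (Suc lo) m"
  let ?B = "\<lambda>j. (\<lambda>a. a @ [lo..<lo+j+1]) ` Vs (lo+j+1) (m-j)"
  have inj: "inj_on (\<lambda>a. a @ X) S" for X :: "nat list" and S by (rule inj_onI) simp
  have cB: "card (?B j) = card (Vs (lo+j+1) (m-j))" for j by (rule card_image[OF inj])
  have fB: "finite (?B j)" for j using Vs_finite by simp
  have last_B: "w \<in> ?B j \<Longrightarrow> last w = lo + j" for w j by auto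
  have disjB: "\<forall>i\<in>{..<m}. \<forall>j\<in>{..<m}. i \<noteq> j \<longrightarrow> ?B i \<inter> ?B j = {}"
  proof (intro ballI impI)
    fix i j :: nat assume ij: "i \<noteq> j"
    show "?B i \<inter> ?B j = {}"
    proof (rule ccontr)
      assume "?B i \<inter> ?B j \<noteq> {}"
      then obtain w where "w \<in> ?B i" "w \<in> ?B j" by blast
      then have "last w = lo + i" "last w = lo + j" using last_B by blast+
      then show False using ij by simp
    qed
  qed
  have cU: "card (\<Union>j<m. ?B j) = (\<Sum>j<m. card (?B j))"
    using card_UN_disjoint[OF _ _ disjB] fB by simp
  have hdA: "w \<in> ?A \<Longrightarrow> hd w = lo" for w by auto
  have hdB: "w \<in> ?B j \<Longrightarrow> j < m \<Longrightarrow> hd w \<noteq> lo" for w j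
  proof -
    assume "w \<in> ?B j" "j < m"
    then obtain a where a: "a \<in> Vs (lo+j+1) (m-j)" "w = a @ [lo..<lo+j+1]" by blast
    have "length a = m - j" using Vs_len[OF a(1)] .
    then have "a \<noteq> []" using \<open>j < m\<close> by auto
    then have "hd w = hd a" "hd a \<in> set a" using a(2) by simp_all
    then show "hd w \<noteq> lo" using Vs_set[OF a(1)] by auto
  qed
  have disj: "?A \<inter> (\<Union>j<m. ?B j) = {}"
  proof (rule ccontr)
    assume "?A \<inter> (\<Union>j<m. ?B j) \<noteq> {}"
    then obtain w j where "w \<in> ?A" "j < m" "w \<in> ?B j" by blast
    then show False using hdA hdB by metis
  qed
  have "card (Vs lo (Suc m)) = card (?A \<union> (\<Union>j<m. ?B j))" by (simp only: Vs_Suc)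
  also have "\<dots> = card ?A + card (\<Union>j<m. ?B j)"
    by (rule card_Un_disjoint) (use Vs_finite fB disj in auto)
  also have "card ?A = card (Vs (Suc lo) m)" by (rule card_image) simp
  finally show ?thesis using cU cB by simp
qed

lemma Vs_card: "card (Vs lo m) = (if m = 0 then 1 else fib (2*m - 1))"
proof (induction m arbitrary: lo rule: less_induct)
  case (less m)
  show ?case
  proof (cases m)
    case 0 then show ?thesis by (simp add: Vs_0)
  next
    case (Suc k)
    have "(\<Sum>j<k. card (Vs (lo+j+1) (k-j))) = (\<Sum>j<k. fib (2*(k-j) - 1))"
      by (rule sum.cong) (use less Suc in auto)
    also have "\<dots> = fib (2*k)" by (rule fib_sum)
    finally have s: "(\<Sum>j<k. card (Vs (lo+j+1) (k-j))) = fib (2*k)" .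
    have c: "card (Vs (Suc lo) k) = (if k = 0 then 1 else fib (2*k - 1))" using less Suc by simp
    have "card (Vs lo m) = (if k = 0 then 1 else fib (2*k - 1)) + fib (2*k)"
      using Vs_card_Suc[of lo k] s c Suc by simp
    also have "\<dots> = fib (2*k+1)"
    proof (cases k)
      case 0 then show ?thesis by simp
    next
      case (Suc k') then show ?thesis by simp
    qed
    finally show ?thesis using Suc by simp
  qed
qed

fun Us :: "nat \<Rightarrow> nat \<Rightarrow> nat list set" where
  "Us lo 0 = {[]}"
| "Us lo (Suc m) = Cons lo ` Us (Suc lo) m \<union> (if m = 0 then {} else (\<lambda>a. a @ [lo]) ` Us (Suc lo) m)"

lemma Us_sub: "Us lo m \<subseteq> Vs lo m"
proof (induction m arbitrary: lo)
  case 0 then show ?case by (simp add: Vs_0)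
next
  case (Suc m)
  have "Cons lo ` Us (Suc lo) m \<subseteq> Vs lo (Suc m)" using Suc Vs_Cons_mem by blast
  moreover have "a @ [lo] \<in> Vs lo (Suc m)" if "a \<in> Us (Suc lo) m" "m \<noteq> 0" for a
    using Vs_app_mem[of a lo 0 m] Suc that by auto
  ultimately show ?case by auto
qed

lemma Us_finite: "finite (Us lo m)"
  using Us_sub Vs_finite finite_subset by blast

lemma Us_card: "card (Us lo (Suc m)) = 2 ^ m"
proof (induction m arbitrary: lo)
  case 0 then show ?case by simp
next
  case (Suc m)
  let ?A = "Cons lo ` Us (Suc lo) (Suc m)"
  let ?B = "(\<lambda>a. a @ [lo]) ` Us (Suc lo) (Suc m)"
  have e: "Us lo (Suc (Suc m)) = ?A \<union> ?B" by simp
  have hdB: "hd w \<noteq> lo" if wB: "w \<in> ?B" for w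
  proof -
    obtain a where a: "a \<in> Us (Suc lo) (Suc m)" "w = a @ [lo]" using wB by blast
    have av: "a \<in> Vs (Suc lo) (Suc m)" using Us_sub a(1) by blast
    have "length a = Suc m" using Vs_len[OF av] .
    then have "a \<noteq> []" by auto
    then have "hd w = hd a" "hd a \<in> set a" using a(2) by simp_all
    then show ?thesis using Vs_set[OF av] by auto
  qed
  have disj: "?A \<inter> ?B = {}"
  proof (rule ccontr)
    assume "?A \<inter> ?B \<noteq> {}"
    then obtain w where w1: "w \<in> ?A" and w2: "w \<in> ?B" by blast
    from w1 have "hd w = lo" by (auto simp del: Us.simps)
    then show False using hdB[OF w2] by simp
  qed
  have "card (Us lo (Suc (Suc m))) = card ?A + card ?B"
    unfolding e using card_Un_disjoint[OF _ _ disj] Us_finite by simp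
  also have "card ?A = 2^m" using Suc by (simp add: card_image)
  also have "card ?B = 2^m" using Suc proof -
    have "inj_on (\<lambda>a. a @ [lo]) (Us (Suc lo) (Suc m))" by (rule inj_onI) simp
    then show ?thesis using Suc by (simp add: card_image)
  qed
  finally show ?case by simp
qed

definition G :: "nat \<Rightarrow> nat list \<Rightarrow> nat \<Rightarrow> (nat \<times> nat) set" where
  "G s w t = set (zip (s # w) (w @ [t]))"

definition dec3 :: "(nat \<times> nat) set \<Rightarrow> bool" where
  "dec3 S \<longleftrightarrow> (\<exists>a1 b1 a2 b2 a3 b3. (a1,b1) \<in> S \<and> (a2,b2) \<in> S \<and> (a3,b3) \<in> S \<and>
     a1 < a2 \<and> a2 < a3 \<and> b2 < b1 \<and> b3 < b2)"

definition dec4 :: "(nat \<times> nat) set \<Rightarrow> bool" where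
  "dec4 S \<longleftrightarrow> (\<exists>a1 b1 a2 b2 a3 b3 a4 b4. (a1,b1) \<in> S \<and> (a2,b2) \<in> S \<and> (a3,b3) \<in> S \<and> (a4,b4) \<in> S \<and>
     a1 < a2 \<and> a2 < a3 \<and> a3 < a4 \<and> b2 < b1 \<and> b3 < b2 \<and> b4 < b3)"

lemma dec3_mono: "S \<subseteq> T \<Longrightarrow> dec3 S \<Longrightarrow> dec3 T"
  unfolding dec3_def by blast

lemma G_Nil: "G s [] t = {(s,t)}"
  unfolding G_def by simp

lemma G_Cons: "G s (x # b) t = insert (s,x) (G x b t)"
  unfolding G_def by simp

lemma G_append: "c \<noteq> [] \<Longrightarrow> G s (a @ c) t = G s a (hd c) \<union> G (hd c) (tl c) t"
proof (induction a arbitrary: s)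
  case Nil
  then show ?case by (cases c) (simp_all add: G_Cons G_Nil)
next
  case (Cons z a)
  then show ?case by (simp add: G_Cons)
qed

lemma G_chain: "G x [Suc x..<x+j+1] t = {(y, Suc y) | y. x \<le> y \<and> y < x + j} \<union> {(x+j, t)}"
proof (induction j arbitrary: x)
  case 0 then show ?case by (auto simp: G_Nil)
next
  case (Suc j)
  have "[Suc x..<x + Suc j + 1] = Suc x # [Suc (Suc x)..<Suc x + j + 1]" by (simp add: upt_conv_Cons del: upt_Suc)
  then have "G x [Suc x..<x + Suc j + 1] t = insert (x, Suc x) (G (Suc x) [Suc (Suc x)..<Suc x + j + 1] t)"
    by (simp add: G_Cons del: upt_Suc)
  also have "\<dots> = insert (x, Suc x) ({(y, Suc y) | y. Suc x \<le> y \<and> y < Suc x + j} \<union> {(Suc x + j, t)})"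
    using Suc.IH[of "Suc x"] by (simp del: upt_Suc)
  also have "\<dots> = {(y, Suc y) | y. x \<le> y \<and> y < x + Suc j} \<union> {(x + Suc j, t)}"
    by auto
  finally show ?case .
qed

lemma G_blk: "a \<noteq> [] \<Longrightarrow> G s (a @ [x..<x+j+1]) t = G s a x \<union> {(y, Suc y) | y. x \<le> y \<and> y < x + j} \<union> {(x+j, t)}"
proof -
  have "[x..<x+j+1] = x # [Suc x..<x+j+1]" by (simp add: upt_conv_Cons del: upt_Suc)
  then show ?thesis using G_append[of "[x..<x+j+1]" s a t] G_chain[of x j t] by (simp del: upt_Suc)
qed

lemma G_mem: "(a,b) \<in> G s w t \<Longrightarrow> (a = s \<or> a \<in> set w) \<and> (b = t \<or> b \<in> set w)"
  unfolding G_def by (auto dest: set_zip_leftD set_zip_rightD)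

lemma G_src:
  assumes h: "(s,b) \<in> G s w t" "s \<notin> set w" "w \<noteq> []"
  shows "b = hd w"
proof -
  obtain x r where Cons: "w = x # r" using h(3) by (cases w) auto
  then have "(s,b) \<in> insert (s,x) (G x r t)" using h G_Cons by simp
  then have "(s,b) = (s,x) \<or> (s,b) \<in> G x r t" by blast
  then show "b = hd w"
  proof
    assume "(s,b) \<in> G x r t"
    then have "s = x \<or> s \<in> set r" using G_mem by blast
    then show ?thesis using h Cons by simp
  qed (simp add: Cons)
qed

definition hA :: "nat \<Rightarrow> nat \<Rightarrow> nat \<Rightarrow> nat \<Rightarrow> nat \<Rightarrow> nat \<Rightarrow> bool" where
 "hA s t lo j a b \<longleftrightarrow> (a = s \<and> lo+j < b) \<or> (lo+j < a \<and> (b = lo \<or> lo+j < b)) \<or> (lo \<le> a \<and> a < lo+j \<and> b = Suc a) \<or> (a = lo+j \<and> b = t)"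

lemma pairA:
  assumes "s < lo" "t < lo" "a < a'" "b' < b" "hA s t lo j a b" "hA s t lo j a' b'"
  shows "a = s \<or> (lo+j < a \<and> lo+j < a' \<and> lo+j < b) \<or> (lo \<le> a \<and> a < lo+j \<and> ((a' = lo+j \<and> b' = t) \<or> (lo+j < a' \<and> b' = lo)))"
  using assms unfolding hA_def by arith

lemma ptA: "hA s t lo j a b \<Longrightarrow> s < lo \<Longrightarrow> s \<le> a"
  unfolding hA_def by arith

lemma arithA4:
  fixes s t lo j a1 a2 a3 a4 b1 b2 b3 b4 :: nat
  assumes st: "s < lo" "t < lo"
    and o: "a1 < a2" "a2 < a3" "a3 < a4" "b2 < b1" "b3 < b2" "b4 < b3"
    and h: "hA s t lo j a1 b1" "hA s t lo j a2 b2" "hA s t lo j a3 b3" "hA s t lo j a4 b4"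
    and c: "lo \<le> a1 \<and> a1 \<le> lo+j \<or> lo \<le> a2 \<and> a2 \<le> lo+j \<or> lo \<le> a3 \<and> a3 \<le> lo+j \<or> lo \<le> a4 \<and> a4 \<le> lo+j"
  shows False
proof -
  have a1s: "s \<le> a1" using ptA[OF h(1) st(1)] .
  note R12 = pairA[OF st o(1) o(4) h(1) h(2)]
  note R23 = pairA[OF st o(2) o(5) h(2) h(3)]
  note R34 = pairA[OF st o(3) o(6) h(3) h(4)]
  have "a2 \<noteq> s" "a3 \<noteq> s" using a1s o by linarith+
  then have "lo+j < a2 \<and> lo+j < b2" using R23 R34 by linarith
  then show False using R12 c o st by arith
qed


lemma arithP:
  fixes s t lo a1 a2 b1 b2 :: nat
  assumes "s < lo" "t < lo" "a1 < a2" "b2 < b1"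
    and "(a1 = s \<and> b1 = lo)" "(a2 = lo \<or> lo < a2) \<and> (b2 = t \<or> lo < b2)"
  shows "b2 = t"
  using assms by arith

lemma G_pt_H:
  assumes "(x,y) \<in> G s a e" "a \<in> Vs L k" "k \<noteq> 0" "s < L"
  shows "(x = s \<and> L \<le> y) \<or> (L \<le> x \<and> (y = e \<or> L \<le> y))"
proof -
  have sa: "set a = {L..<L+k}" using Vs_set[OF assms(2)] .
  have ane: "a \<noteq> []" using Vs_len[OF assms(2)] assms(3) by auto
  have m: "(x = s \<or> x \<in> set a) \<and> (y = e \<or> y \<in> set a)" using G_mem[OF assms(1)] .
  show ?thesis
  proof (cases "x = s")
    case True
    have "s \<notin> set a" using sa assms(4) by simp
    then have "y = hd a" using G_src[of s y a e] assms(1) True ane by simp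
    then have "y \<in> set a" using ane by simp
    then show ?thesis using True sa by simp
  next
    case False
    then show ?thesis using m sa by auto
  qed
qed

lemma no_dec4: "w \<in> Vs lo m \<Longrightarrow> s < lo \<Longrightarrow> t < lo \<Longrightarrow> \<not> dec4 (G s w t)"
proof (induction m arbitrary: lo s t w rule: less_induct)
  case (less m)
  show ?case
  proof (cases m)
    case 0
    then have "w = []" using less.prems(1) Vs_0 by simp
    then show ?thesis by (simp add: dec4_def G_Nil)
  next
    case (Suc k)
    from less.prems(1) Suc Vs_Suc
    have "w \<in> Cons lo ` Vs (Suc lo) k \<union> (\<Union>j<k. (\<lambda>a. a @ [lo..<lo+j+1]) ` Vs (lo+j+1) (k-j))" by simp
    then show ?thesis
    proof
      assume "w \<in> Cons lo ` Vs (Suc lo) k"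
      then obtain b where b: "w = lo # b" "b \<in> Vs (Suc lo) k" by blast
      have IH: "\<not> dec4 (G lo b t)" by (rule less.IH[OF _ b(2)]) (use Suc less.prems in simp_all)
      have Gw: "G s w t = insert (s,lo) (G lo b t)" using b G_Cons by simp
      have pt: "(a = lo \<or> lo < a) \<and> (c = t \<or> lo < c)" if "(a,c) \<in> G lo b t" for a c
        using G_mem[OF that] Vs_set[OF b(2)] by auto
      show ?thesis
      proof
        assume "dec4 (G s w t)"
        then obtain a1 b1 a2 b2 a3 b3 a4 b4 where
          P: "(a1,b1) \<in> G s w t" "(a2,b2) \<in> G s w t" "(a3,b3) \<in> G s w t" "(a4,b4) \<in> G s w t"
          and o: "a1 < a2" "a2 < a3" "a3 < a4" "b2 < b1" "b3 < b2" "b4 < b3"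
          unfolding dec4_def by blast
        have H: "(a1 = s \<and> b1 = lo) \<or> (a1,b1) \<in> G lo b t" "(a2 = s \<and> b2 = lo) \<or> (a2,b2) \<in> G lo b t"
          "(a3 = s \<and> b3 = lo) \<or> (a3,b3) \<in> G lo b t" "(a4 = s \<and> b4 = lo) \<or> (a4,b4) \<in> G lo b t"
          using P Gw by auto
        have s1: "s \<le> a1" using H(1) pt[of a1 b1] less.prems(2) by auto
        have i2: "(a2,b2) \<in> G lo b t" using H(2) s1 o by auto
        have i3: "(a3,b3) \<in> G lo b t" using H(3) s1 o by auto
        have i4: "(a4,b4) \<in> G lo b t" using H(4) s1 o by auto
        show False
        proof (cases "(a1,b1) \<in> G lo b t")
          case True
          then have "dec4 (G lo b t)" unfolding dec4_def using i2 i3 i4 o by blast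
          then show False using IH by simp
        next
          case False
          then have e1: "a1 = s \<and> b1 = lo" using H(1) by simp
          have "b2 = t" using arithP[OF less.prems(2,3) o(1) o(4) e1 pt[OF i2]] .
          then show False using pt[OF i3] o(5) less.prems(3) by arith
        qed
      qed
    next
      assume "w \<in> (\<Union>j<k. (\<lambda>a. a @ [lo..<lo+j+1]) ` Vs (lo+j+1) (k-j))"
      then obtain j a where ja: "j < k" "w = a @ [lo..<lo+j+1]" "a \<in> Vs (lo+j+1) (k-j)" by blast
      have ane: "a \<noteq> []" using Vs_len[OF ja(3)] ja(1) by auto
      have IH: "\<not> dec4 (G s a lo)" by (rule less.IH[OF _ ja(3)]) (use Suc less.prems in simp_all)
      have Gw: "G s w t = G s a lo \<union> {(y, Suc y) | y. lo \<le> y \<and> y < lo + j} \<union> {(lo+j, t)}"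
        using G_blk[OF ane] ja by simp
      have pt: "hA s t lo j x y \<and> ((x,y) \<in> G s a lo \<or> (lo \<le> x \<and> x \<le> lo+j))" if "(x,y) \<in> G s w t" for x y
      proof (cases "(x,y) \<in> G s a lo")
        case True
        have "(x = s \<and> lo+j+1 \<le> y) \<or> (lo+j+1 \<le> x \<and> (y = lo \<or> lo+j+1 \<le> y))"
          using G_pt_H[OF True ja(3)] ja(1) less.prems(2) by simp
        then show ?thesis unfolding hA_def using True by auto
      next
        case False
        then have "(lo \<le> x \<and> x < lo + j \<and> y = Suc x) \<or> (x = lo + j \<and> y = t)" using that Gw by auto
        then show ?thesis unfolding hA_def by auto
      qed
      show ?thesis
      proof
        assume "dec4 (G s w t)"
        then obtain a1 b1 a2 b2 a3 b3 a4 b4 where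
          P: "(a1,b1) \<in> G s w t" "(a2,b2) \<in> G s w t" "(a3,b3) \<in> G s w t" "(a4,b4) \<in> G s w t"
          and o: "a1 < a2" "a2 < a3" "a3 < a4" "b2 < b1" "b3 < b2" "b4 < b3"
          unfolding dec4_def by blast
        show False
        proof (cases "(a1,b1) \<in> G s a lo \<and> (a2,b2) \<in> G s a lo \<and> (a3,b3) \<in> G s a lo \<and> (a4,b4) \<in> G s a lo")
          case True
          then have "dec4 (G s a lo)" unfolding dec4_def using o by blast
          then show False using IH by simp
        next
          case False
          then have c: "lo \<le> a1 \<and> a1 \<le> lo+j \<or> lo \<le> a2 \<and> a2 \<le> lo+j \<or> lo \<le> a3 \<and> a3 \<le> lo+j \<or> lo \<le> a4 \<and> a4 \<le> lo+j"
            using pt[OF P(1)] pt[OF P(2)] pt[OF P(3)] pt[OF P(4)] by blast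
          show False using arithA4[OF less.prems(2,3) o _ _ _ _ c] pt[OF P(1)] pt[OF P(2)] pt[OF P(3)] pt[OF P(4)]
            by blast
        qed
      qed
    qed
  qed
qed

lemma no_dec3_U: "w \<in> Us lo m \<Longrightarrow> s < lo \<Longrightarrow> t < lo \<Longrightarrow> \<not> dec3 (G s w t)"
proof (induction m arbitrary: lo s t w)
  case 0
  then have "w = []" by simp
  then show ?case by (simp add: dec3_def G_Nil)
next
  case (Suc k)
  from Suc.prems(1)
  have "w \<in> Cons lo ` Us (Suc lo) k \<or> (k \<noteq> 0 \<and> w \<in> (\<lambda>a. a @ [lo]) ` Us (Suc lo) k)"
    by (auto split: if_splits simp del: Us.simps(2) simp add: Us.simps(2)[of lo k])
  then show ?case
  proof
    assume "w \<in> Cons lo ` Us (Suc lo) k"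
    then obtain b where b: "w = lo # b" "b \<in> Us (Suc lo) k" by blast
    have bV: "b \<in> Vs (Suc lo) k" using Us_sub b(2) by blast
    have IH: "\<not> dec3 (G lo b t)" by (rule Suc.IH[OF b(2)]) (use Suc.prems in simp_all)
    have Gw: "G s w t = insert (s,lo) (G lo b t)" using b G_Cons by simp
    have pt: "(a = lo \<or> lo < a) \<and> (c = t \<or> lo < c)" if "(a,c) \<in> G lo b t" for a c
      using G_mem[OF that] Vs_set[OF bV] by auto
    show ?thesis
    proof
      assume "dec3 (G s w t)"
      then obtain a1 b1 a2 b2 a3 b3 where
        P: "(a1,b1) \<in> G s w t" "(a2,b2) \<in> G s w t" "(a3,b3) \<in> G s w t"
        and o: "a1 < a2" "a2 < a3" "b2 < b1" "b3 < b2"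
        unfolding dec3_def by blast
      have H: "(a1 = s \<and> b1 = lo) \<or> (a1,b1) \<in> G lo b t" "(a2 = s \<and> b2 = lo) \<or> (a2,b2) \<in> G lo b t"
        "(a3 = s \<and> b3 = lo) \<or> (a3,b3) \<in> G lo b t"
        using P Gw by auto
      have s1: "s \<le> a1" using H(1) pt[of a1 b1] Suc.prems(2) by auto
      have i2: "(a2,b2) \<in> G lo b t" using H(2) s1 o by auto
      have i3: "(a3,b3) \<in> G lo b t" using H(3) s1 o by auto
      show False
      proof (cases "(a1,b1) \<in> G lo b t")
        case True
        then have "dec3 (G lo b t)" unfolding dec3_def using i2 i3 o by blast
        then show False using IH by simp
      next
        case False
        then have e1: "a1 = s \<and> b1 = lo" using H(1) by simp
        have "b2 = t" using arithP[OF Suc.prems(2,3) o(1) o(3) e1 pt[OF i2]] .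
        then show False using pt[OF i3] o(4) Suc.prems(3) by arith
      qed
    qed
  next
    assume "k \<noteq> 0 \<and> w \<in> (\<lambda>a. a @ [lo]) ` Us (Suc lo) k"
    then obtain a where ka: "k \<noteq> 0" "w = a @ [lo]" "a \<in> Us (Suc lo) k" by blast
    have aV: "a \<in> Vs (Suc lo) k" using Us_sub ka(3) by blast
    have ane: "a \<noteq> []" using Vs_len[OF aV] ka(1) by auto
    have IH: "\<not> dec3 (G s a lo)" by (rule Suc.IH[OF ka(3)]) (use Suc.prems in simp_all)
    have Gw: "G s w t = G s a lo \<union> {(lo, t)}"
      using G_append[of "[lo]" s a t] G_Nil ka by simp
    have pt: "((x = s \<and> lo < y) \<or> (lo < x \<and> (y = lo \<or> lo < y)) \<or> (x = lo \<and> y = t))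
       \<and> ((x,y) \<in> G s a lo \<or> x = lo)" if "(x,y) \<in> G s w t" for x y
    proof (cases "(x,y) \<in> G s a lo")
      case True
      have "(x = s \<and> Suc lo \<le> y) \<or> (Suc lo \<le> x \<and> (y = lo \<or> Suc lo \<le> y))"
        using G_pt_H[OF True aV ka(1)] Suc.prems(2) by simp
      then show ?thesis using True by auto
    next
      case False
      then show ?thesis using that Gw by auto
    qed
    show ?thesis
    proof
      assume "dec3 (G s w t)"
      then obtain a1 b1 a2 b2 a3 b3 where
        P: "(a1,b1) \<in> G s w t" "(a2,b2) \<in> G s w t" "(a3,b3) \<in> G s w t"
        and o: "a1 < a2" "a2 < a3" "b2 < b1" "b3 < b2"
        unfolding dec3_def by blast
      show False
      proof (cases "(a1,b1) \<in> G s a lo \<and> (a2,b2) \<in> G s a lo \<and> (a3,b3) \<in> G s a lo")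
        case True
        then have "dec3 (G s a lo)" unfolding dec3_def using o by blast
        then show False using IH by simp
      next
        case False
        then have c: "a1 = lo \<or> a2 = lo \<or> a3 = lo"
          using pt[OF P(1)] pt[OF P(2)] pt[OF P(3)] by blast
        have h: "(a1 = s \<and> lo < b1) \<or> (lo < a1 \<and> (b1 = lo \<or> lo < b1)) \<or> (a1 = lo \<and> b1 = t)"
          "(a2 = s \<and> lo < b2) \<or> (lo < a2 \<and> (b2 = lo \<or> lo < b2)) \<or> (a2 = lo \<and> b2 = t)"
          "(a3 = s \<and> lo < b3) \<or> (lo < a3 \<and> (b3 = lo \<or> lo < b3)) \<or> (a3 = lo \<and> b3 = t)"
          using pt[OF P(1)] pt[OF P(2)] pt[OF P(3)] by blast+
        show False using h c o Suc.prems(2,3) by arith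
      qed
    qed
  qed
qed

lemma dec3_VU: "w \<in> Vs lo m \<Longrightarrow> w \<notin> Us lo m \<Longrightarrow> s < lo \<Longrightarrow> t < lo \<Longrightarrow> dec3 (G s w t)"
proof (induction m arbitrary: lo s t w rule: less_induct)
  case (less m)
  show ?case
  proof (cases m)
    case 0
    then show ?thesis using less.prems(1,2) Vs_0 by simp
  next
    case (Suc k)
    from less.prems(1) Suc Vs_Suc
    have "w \<in> Cons lo ` Vs (Suc lo) k \<union> (\<Union>j<k. (\<lambda>a. a @ [lo..<lo+j+1]) ` Vs (lo+j+1) (k-j))" by simp
    then show ?thesis
    proof
      assume "w \<in> Cons lo ` Vs (Suc lo) k"
      then obtain b where b: "w = lo # b" "b \<in> Vs (Suc lo) k" by blast
      have "b \<notin> Us (Suc lo) k"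
      proof
        assume "b \<in> Us (Suc lo) k"
        then have "w \<in> Us lo (Suc k)" using b(1) by simp
        then show False using less.prems(2) Suc by simp
      qed
      then have "dec3 (G lo b t)" by (intro less.IH[OF _ b(2)]) (use Suc less.prems in simp_all)
      moreover have "G lo b t \<subseteq> G s w t" using b G_Cons by auto
      ultimately show ?thesis using dec3_mono by blast
    next
      assume "w \<in> (\<Union>j<k. (\<lambda>a. a @ [lo..<lo+j+1]) ` Vs (lo+j+1) (k-j))"
      then obtain j a where ja: "j < k" "w = a @ [lo..<lo+j+1]" "a \<in> Vs (lo+j+1) (k-j)" by blast
      have ane: "a \<noteq> []" using Vs_len[OF ja(3)] ja(1) by auto
      have Gw: "G s w t = G s a lo \<union> {(y, Suc y) | y. lo \<le> y \<and> y < lo + j} \<union> {(lo+j, t)}"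
        using G_blk[OF ane] ja by simp
      show ?thesis
      proof (cases "j = 0")
        case True
        have w0: "w = a @ [lo]" using ja(2) True by simp
        have aV: "a \<in> Vs (Suc lo) k" using ja(3) True by simp
        have "a \<notin> Us (Suc lo) k"
        proof
          assume "a \<in> Us (Suc lo) k"
          then have "w \<in> Us lo (Suc k)" using w0 ja(1) by simp
          then show False using less.prems(2) Suc by simp
        qed
        then have "dec3 (G s a lo)" by (intro less.IH[OF _ aV]) (use Suc less.prems in simp_all)
        moreover have "G s a lo \<subseteq> G s w t" using Gw by auto
        ultimately show ?thesis using dec3_mono by blast
      next
        case False
        have p1: "(s, hd a) \<in> G s w t"
        proof -
          have "(s, hd a) \<in> G s a lo" using ane unfolding G_def by (cases a) auto
          then show ?thesis using Gw by auto
        qed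
        have p2: "(lo, Suc lo) \<in> G s w t" using Gw False by auto
        have p3: "(lo + j, t) \<in> G s w t" using Gw by auto
        have "hd a \<in> set a" using ane by simp
        then have "lo + j + 1 \<le> hd a" using Vs_set[OF ja(3)] by simp
        then show ?thesis unfolding dec3_def using p1 p2 p3 False less.prems(3,4)
          by (rule_tac x=s in exI, rule_tac x="hd a" in exI, rule_tac x=lo in exI, rule_tac x="Suc lo" in exI,
              rule_tac x="lo+j" in exI, rule_tac x=t in exI) simp
      qed
    qed
  qed
qed

lemma contains_1324:
  "contains_pat xs [1,3,2,4] \<longleftrightarrow>
   (\<exists>a b c d. a < b \<and> b < c \<and> c < d \<and> d < length xs \<and> xs!a < xs!c \<and> xs!c < xs!b \<and> xs!b < xs!d)"
proof
  assume "contains_pat xs [1,3,2,4]"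
  then obtain f where m: "\<forall>a b. a < b \<and> b < length [1::nat,3,2,4] \<longrightarrow> f a < f b"
    and l: "\<forall>a < length [1::nat,3,2,4]. f a < length xs"
    and v: "\<forall>a b. a < length [1::nat,3,2,4] \<and> b < length [1::nat,3,2,4] \<longrightarrow> (xs ! f a < xs ! f b \<longleftrightarrow> [1::nat,3,2,4] ! a < [1,3,2,4] ! b)"
    unfolding contains_pat_def by blast
  have "f 0 < f 1" "f 1 < f 2" "f 2 < f 3" using m by simp_all
  moreover have "f 3 < length xs" using l by simp
  moreover have "xs ! f 0 < xs ! f 2" using v[rule_format, of 0 2] by simp
  moreover have "xs ! f 2 < xs ! f 1" using v[rule_format, of 2 1] by simp
  moreover have "xs ! f 1 < xs ! f 3" using v[rule_format, of 1 3] by simp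
  ultimately show "\<exists>a b c d. a < b \<and> b < c \<and> c < d \<and> d < length xs \<and> xs!a < xs!c \<and> xs!c < xs!b \<and> xs!b < xs!d"
    by blast
next
  assume "\<exists>a b c d. a < b \<and> b < c \<and> c < d \<and> d < length xs \<and> xs!a < xs!c \<and> xs!c < xs!b \<and> xs!b < xs!d"
  then obtain a b c d where h: "a < b" "b < c" "c < d" "d < length xs" "xs!a < xs!c" "xs!c < xs!b" "xs!b < xs!d"
    by blast
  define f where "f = (\<lambda>i::nat. if i = 0 then a else if i = 1 then b else if i = 2 then c else d)"
  have L: "i < 4 \<longleftrightarrow> i = 0 \<or> i = 1 \<or> i = 2 \<or> i = 3" for i :: nat by arith
  show "contains_pat xs [1,3,2,4]" unfolding contains_pat_def
  proof (rule exI[of _ f], intro conjI allI impI)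
    fix i j :: nat assume "i < j \<and> j < length [1::nat,3,2,4]"
    then have "i < j" "j < 4" by simp_all
    then show "f i < f j" using h unfolding f_def L by (auto simp: L)
  next
    fix i :: nat assume "i < length [1::nat,3,2,4]"
    then have "i < 4" by simp
    then show "f i < length xs" using h unfolding f_def L by auto
  next
    fix i j :: nat assume "i < length [1::nat,3,2,4] \<and> j < length [1::nat,3,2,4]"
    then have "i < 4" "j < 4" by simp_all
    then show "(xs ! f i < xs ! f j) = ([1::nat,3,2,4] ! i < [1,3,2,4] ! j)"
      using h unfolding f_def L by auto
  qed
qed

lemma delta_nth: "a < k \<Longrightarrow> delta k ! a = k - a"
  unfolding delta_def by (simp add: rev_nth nth_upt del: upt_Suc)

lemma delta_len: "length (delta k) = k"
  unfolding delta_def by simp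

lemma contains_delta_dec4:
  assumes "contains_pat xs (delta k)" "4 \<le> k"
  shows "\<exists>i1 i2 i3 i4. i1 < i2 \<and> i2 < i3 \<and> i3 < i4 \<and> i4 < length xs \<and>
           xs!i2 < xs!i1 \<and> xs!i3 < xs!i2 \<and> xs!i4 < xs!i3"
proof -
  obtain f where m: "\<forall>a b. a < b \<and> b < k \<longrightarrow> f a < f b"
    and l: "\<forall>a < k. f a < length xs"
    and v: "\<forall>a b. a < k \<and> b < k \<longrightarrow> (xs ! f a < xs ! f b \<longleftrightarrow> delta k ! a < delta k ! b)"
    using assms(1) unfolding contains_pat_def delta_len by blast
  have d: "xs ! f b < xs ! f a" if "a < b" "b < k" for a b
    using v[rule_format, of b a] that delta_nth[of a k] delta_nth[of b k] by simp
  show ?thesis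
    apply (rule exI[of _ "f 0"], rule exI[of _ "f 1"], rule exI[of _ "f 2"], rule exI[of _ "f 3"])
    using m l d assms(2) by simp
qed

lemma contains_delta3:
  "contains_pat xs (delta 3) \<longleftrightarrow>
   (\<exists>i1 i2 i3. i1 < i2 \<and> i2 < i3 \<and> i3 < length xs \<and> xs!i2 < xs!i1 \<and> xs!i3 < xs!i2)"
proof
  assume "contains_pat xs (delta 3)"
  then obtain f where m: "\<forall>a b. a < b \<and> b < 3 \<longrightarrow> f a < f b"
    and l: "\<forall>a < 3. f a < length xs"
    and v: "\<forall>a b. a < 3 \<and> b < 3 \<longrightarrow> (xs ! f a < xs ! f b \<longleftrightarrow> delta 3 ! a < delta 3 ! b)"
    unfolding contains_pat_def delta_len by blast
  have d: "xs ! f b < xs ! f a" if "a < b" "b < 3" for a b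
    using v[rule_format, of b a] that delta_nth[of a 3] delta_nth[of b 3] by simp
  show "\<exists>i1 i2 i3. i1 < i2 \<and> i2 < i3 \<and> i3 < length xs \<and> xs!i2 < xs!i1 \<and> xs!i3 < xs!i2"
    apply (rule exI[of _ "f 0"], rule exI[of _ "f 1"], rule exI[of _ "f 2"])
    using m l d by simp
next
  assume "\<exists>i1 i2 i3. i1 < i2 \<and> i2 < i3 \<and> i3 < length xs \<and> xs!i2 < xs!i1 \<and> xs!i3 < xs!i2"
  then obtain a b c where h: "a < b" "b < c" "c < length xs" "xs!b < xs!a" "xs!c < xs!b" by blast
  define f where "f = (\<lambda>i::nat. if i = 0 then a else if i = 1 then b else c)"
  have L: "i < 3 \<longleftrightarrow> i = 0 \<or> i = 1 \<or> i = 2" for i :: nat by arith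
  have D: "delta 3 = [3,2,1]" unfolding delta_def by (simp add: upt_rec)
  show "contains_pat xs (delta 3)" unfolding contains_pat_def delta_len
  proof (rule exI[of _ f], intro conjI allI impI)
    fix i j :: nat assume "i < j \<and> j < 3"
    then show "f i < f j" using h unfolding f_def L by auto
  next
    fix i :: nat assume "i < 3"
    then show "f i < length xs" using h unfolding f_def L by auto
  next
    fix i j :: nat assume "i < 3 \<and> j < 3"
    then show "(xs ! f i < xs ! f j) = (delta 3 ! i < delta 3 ! j)"
      using h unfolding f_def L D by auto
  qed
qed

lemma c213:
  assumes "c = 1 # w" "0 < p" "p < q" "q < u" "u < length c" "c!q < c!p" "c!p < c!u"
  shows "has213 w"
  unfolding has213_def
  apply (rule exI[of _ "p - 1"], rule exI[of _ "q - 1"], rule exI[of _ "u - 1"])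
  using assms by (auto simp: nth_Cons')

lemma c4132:
  assumes "c = 1 # w" "0 < p" "p < q" "q < u" "u < v" "v < length c" "c!q < c!v" "c!v < c!u" "c!u < c!p"
  shows "has4132 w"
  unfolding has4132_def
  apply (rule exI[of _ "p - 1"], rule exI[of _ "q - 1"], rule exI[of _ "u - 1"], rule exI[of _ "v - 1"])
  using assms by (auto simp: nth_Cons')

lemma rot_to_w:
  assumes c: "c = 1 # w" and pos: "\<forall>x\<in>set w. 1 < x"
    and con: "contains_pat (rotate r c) [1,3,2,4]" and r: "r < length c"
  shows "has213 w \<or> has4132 w"
proof -
  define n where "n = length c"
  obtain a b cc d where h: "a < b" "b < cc" "cc < d" "d < n"
    "rotate r c ! a < rotate r c ! cc" "rotate r c ! cc < rotate r c ! b" "rotate r c ! b < rotate r c ! d"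
    using con unfolding contains_1324 n_def by auto
  define g where "g t = (r + t) mod n" for t
  have rn: "rotate r c ! t = c ! g t" if "t < n" for t
    using that unfolding g_def n_def by (simp add: nth_rotate)
  have v: "c ! g a < c ! g cc" "c ! g cc < c ! g b" "c ! g b < c ! g d"
    using h rn[of a] rn[of b] rn[of cc] rn[of d] by auto
  have ge1: "1 \<le> c ! x" if "x < n" for x
  proof (cases x)
    case 0 then show ?thesis using c by simp
  next
    case (Suc y) then have "c ! x \<in> set w" using c that unfolding n_def by simp
    then show ?thesis using pos by auto
  qed
  have nz: "x \<noteq> 0" if "c ! y < c ! x" "y < n" for x y
  proof
    assume "x = 0"
    then have "c ! x = 1" using c by simp
    then show False using that ge1[of y] by simp
  qed
  have gn: "g t < n" for t unfolding g_def n_def using c by simp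
  have g1: "g t = r + t" if "r + t < n" for t using that unfolding g_def by simp
  have g2: "g t = r + t - n" if "n \<le> r + t" "t < n" for t
  proof -
    have "r + t < 2 * n" using that r unfolding n_def by simp
    then show ?thesis using that unfolding g_def by (simp add: le_mod_geq)
  qed
  have b_ne: "g b \<noteq> 0" using nz[OF v(2) gn] .
  have cc_ne: "g cc \<noteq> 0" using nz[of "g a" "g cc"] v(1) gn[of a] by simp
  have d_ne: "g d \<noteq> 0" using nz[of "g a" "g d"] v gn[of a] by simp
  have nn: "n = length c" by (simp add: n_def)
  show ?thesis
  proof (cases "r + d < n \<or> n \<le> r + b")
    case True
    then have "g b < g cc" "g cc < g d"
      using g1[of b] g1[of cc] g1[of d] g2[of b] g2[of cc] g2[of d] h by auto
    then have "has213 w" using c213[OF c _ _ _ _ v(2) v(3)] b_ne gn[of d] nn by simp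
    then show ?thesis by simp
  next
    case False
    show ?thesis
    proof (cases "n \<le> r + cc")
      case True
      then have "g cc < g a" "g a < g b"
        using False g1[of a] g1[of b] g2[of cc] h by auto
      then have "has213 w" using c213[OF c _ _ _ _ v(1) v(2)] cc_ne gn[of b] nn
        by simp
      then show ?thesis by simp
    next
      case F2: False
      then have "g d < g a" "g a < g b" "g b < g cc"
        using False g1[of a] g1[of b] g1[of cc] g2[of d] h by auto
      then have "has4132 w" using c4132[OF c _ _ _ _ _ v(1) v(2)] d_ne gn[of cc] nn v
        by simp
      then show ?thesis by simp
    qed
  qed
qed

lemma w_to_rot:
  assumes c: "c = 1 # w" and pos: "\<forall>x\<in>set w. 1 < x" and hw: "has213 w \<or> has4132 w"
  shows "\<exists>r < length c. contains_pat (rotate r c) [1,3,2,4]"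
  using hw
proof
  assume "has213 w"
  then obtain i j k where h: "i<j" "j<k" "k<length w" "w!j < w!i" "w!i < w!k"
    unfolding has213_def by blast
  have "w!j \<in> set w" using h by simp
  then have "1 < w!j" using pos by blast
  then have "contains_pat c [1,3,2,4]" unfolding contains_1324
    apply (rule_tac x=0 in exI, rule_tac x="Suc i" in exI, rule_tac x="Suc j" in exI, rule_tac x="Suc k" in exI)
    using h c by simp
  then show ?thesis using c by (rule_tac x=0 in exI) simp
next
  assume "has4132 w"
  then obtain i j k l where h: "i<j" "j<k" "k<l" "l<length w" "w!j < w!l" "w!l < w!k" "w!k < w!i"
    unfolding has4132_def by blast
  define n where "n = length c"
  have n: "n = Suc (length w)" using c n_def by simp
  define r where "r = Suc j"
  have rn: "rotate r c ! t = c ! ((r + t) mod n)" if "t < n" for t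
    using that unfolding n_def by (simp add: nth_rotate)
  have e0: "rotate r c ! 0 = w ! j" using rn[of 0] n c unfolding r_def using h by simp
  have e1: "rotate r c ! (k - j) = w ! k" using rn[of "k-j"] n c h unfolding r_def by simp
  have e2: "rotate r c ! (l - j) = w ! l" using rn[of "l-j"] n c h unfolding r_def by simp
  have e3: "rotate r c ! (n + i - j) = w ! i"
  proof -
    have "r + (n + i - j) = n + Suc i" unfolding r_def using h n by simp
    moreover have "Suc i < n" using h n by simp
    ultimately have "(r + (n + i - j)) mod n = Suc i"
      by (metis add.commute mod_add_self2 mod_less)
    then show ?thesis using rn[of "n + i - j"] n c h by simp
  qed
  have "contains_pat (rotate r c) [1,3,2,4]" unfolding contains_1324
    apply (rule exI[of _ 0], rule exI[of _ "k - j"], rule exI[of _ "l - j"], rule exI[of _ "n + i - j"])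
    using h e0 e1 e2 e3 n unfolding n_def by (simp; arith)
  moreover have "r < length c" unfolding r_def using h c by simp
  ultimately show ?thesis by blast
qed

lemma rot_iff:
  assumes c: "c = 1 # w" and pos: "\<forall>x\<in>set w. 1 < x"
  shows "(\<forall>j < length c. avoids (rotate j c) [1,3,2,4]) \<longleftrightarrow> \<not> has213 w \<and> \<not> has4132 w"
  using rot_to_w[OF c pos] w_to_rot[OF c pos] unfolding avoids_def by blast

lemma orbit_in:
  assumes "p permutes {1..n}" "x \<in> {1..n}" shows "(p ^^ i) x \<in> {1..n}"
  by (induction i) (use assms permutes_in_image[OF assms(1)] in auto)

lemma funpow_split: "i \<le> j \<Longrightarrow> (f ^^ j) x = (f ^^ i) ((f ^^ (j - i)) x)"
proof -
  assume "i \<le> j"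
  then have "j = i + (j - i)" by simp
  then show ?thesis by (metis funpow_add comp_apply)
qed

lemma orbit_period:
  assumes "(p ^^ d) x = x" shows "(p ^^ (q * d + r)) x = (p ^^ r) x"
proof (induction q)
  case 0 then show ?case by simp
next
  case (Suc q)
  have "Suc q * d + r = (q * d + r) + d" by simp
  then have "(p ^^ (Suc q * d + r)) x = (p ^^ (q * d + r)) ((p ^^ d) x)"
    by (metis funpow_add comp_apply)
  then show ?case using Suc assms by simp
qed

lemma cyc_no_short_period:
  assumes cp: "cyclic_perm n p" and d: "0 < d" "(p ^^ d) 1 = 1"
  shows "n \<le> d"
proof -
  have "{1..n} \<subseteq> {(p ^^ i) 1 | i. True}" using cp unfolding cyclic_perm_def by simp
  also have "\<dots> \<subseteq> (\<lambda>i. (p ^^ i) 1) ` {..<d}"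
  proof
    fix y assume "y \<in> {(p ^^ i) 1 | i. True}"
    then obtain i where i: "y = (p ^^ i) 1" by blast
    have "i = (i div d) * d + i mod d" by simp
    then have "y = (p ^^ (i mod d)) 1" using orbit_period[OF d(2), of "i div d" "i mod d"] i by metis
    moreover have "i mod d < d" using d(1) by simp
    ultimately show "y \<in> (\<lambda>i. (p ^^ i) 1) ` {..<d}" by blast
  qed
  finally have "card {1..n} \<le> card ((\<lambda>i. (p ^^ i) 1) ` {..<d})" by (rule card_mono[rotated]) simp
  also have "\<dots> \<le> card {..<d}" by (rule card_image_le) simp
  finally show ?thesis by simp
qed

lemma cyc_inj_orbit:
  assumes cp: "cyclic_perm n p" and ij: "i < j" "j < n" and e: "(p ^^ i) 1 = (p ^^ j) 1"
  shows False
proof -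
  have perm: "p permutes {1..n}" using cp unfolding cyclic_perm_def by simp
  have inj: "inj (p ^^ i)" using permutes_inj[OF perm] by simp
  have "(p ^^ j) 1 = (p ^^ i) ((p ^^ (j - i)) 1)" using ij funpow_split[of i j p 1] by simp
  then have "(p ^^ i) ((p ^^ (j - i)) 1) = (p ^^ i) 1" using e by simp
  then have "(p ^^ (j - i)) 1 = 1" using inj by (simp add: inj_eq)
  then have "n \<le> j - i" using cyc_no_short_period[OF cp] ij by simp
  then show False using ij by simp
qed

lemma cyc_props:
  assumes cp: "cyclic_perm n p" and n: "1 \<le> n"
  shows "length (cycle_form n p) = n" "distinct (cycle_form n p)" "set (cycle_form n p) = {1..n}"
    "cycle_form n p ! 0 = 1" "\<And>i. i < n \<Longrightarrow> p (cycle_form n p ! i) = cycle_form n p ! (Suc i mod n)"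
proof -
  let ?c = "cycle_form n p"
  have perm: "p permutes {1..n}" using cp unfolding cyclic_perm_def by simp
  have cn: "?c ! i = (p ^^ i) 1" if "i < n" for i using that unfolding cycle_form_def by simp
  show len: "length ?c = n" unfolding cycle_form_def by simp
  show dc: "distinct ?c"
  proof (rule distinct_conv_nth[THEN iffD2], intro allI impI)
    fix i j assume "i < length ?c" "j < length ?c" "i \<noteq> j"
    then show "?c ! i \<noteq> ?c ! j" using cyc_inj_orbit[OF cp, of i j] cyc_inj_orbit[OF cp, of j i] cn len
      by (metis linorder_neqE_nat)
  qed
  have sub: "set ?c \<subseteq> {1..n}" unfolding cycle_form_def using orbit_in[OF perm] n by auto
  then show sc: "set ?c = {1..n}"
    using distinct_card[OF dc] len by (intro card_subset_eq) auto
  show c0: "?c ! 0 = 1" using cn n by simp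
  fix i assume i: "i < n"
  show "p (?c ! i) = ?c ! (Suc i mod n)"
  proof (cases "Suc i < n")
    case True
    then show ?thesis using cn i by simp
  next
    case False
    then have si: "Suc i = n" using i by simp
    have "p (?c ! i) = (p ^^ n) 1" using cn i si by (metis funpow.simps(2) comp_apply)
    moreover have "(p ^^ n) 1 \<in> set ?c" using sc orbit_in[OF perm] n by auto
    then obtain i' where i': "i' < n" "?c ! i' = (p ^^ n) 1" using len by (auto simp: in_set_conv_nth)
    have "i' = 0"
    proof (rule ccontr)
      assume "i' \<noteq> 0"
      have inj: "inj (p ^^ i')" using permutes_inj[OF perm] by simp
      have "(p ^^ n) 1 = (p ^^ i') ((p ^^ (n - i')) 1)" using i' funpow_split[of i' n p 1] by simp
      then have "(p ^^ (n - i')) 1 = 1" using i' cn inj by (simp add: inj_eq)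
      then have "n \<le> n - i'" using cyc_no_short_period[OF cp] i' \<open>i' \<noteq> 0\<close> by simp
      then show False using i' \<open>i' \<noteq> 0\<close> by simp
    qed
    ultimately show ?thesis using i' c0 si by simp
  qed
qed

lemma cyc_inj: "inj_on (cycle_form n) {p. cyclic_perm n p}"
proof (rule inj_onI)
  fix p q assume p: "p \<in> {p. cyclic_perm n p}" and q: "q \<in> {p. cyclic_perm n p}"
    and e: "cycle_form n p = cycle_form n q"
  have pp: "p permutes {1..n}" and qp: "q permutes {1..n}" using p q unfolding cyclic_perm_def by auto
  show "p = q"
  proof
    fix x
    show "p x = q x"
    proof (cases "x \<in> {1..n}")
      case False
      then show ?thesis using permutes_not_in[OF pp] permutes_not_in[OF qp] by simp
    next
      case True
      then have n: "1 \<le> n" by simp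
      have "x \<in> set (cycle_form n p)" using cyc_props(3)[OF _ n] p True by simp
      then obtain i where i: "i < n" "cycle_form n p ! i = x"
        using cyc_props(1)[OF _ n] p by (auto simp: in_set_conv_nth)
      have "p x = cycle_form n p ! (Suc i mod n)" using cyc_props(5)[OF _ n i(1)] p i by simp
      moreover have "q x = cycle_form n q ! (Suc i mod n)" using cyc_props(5)[OF _ n i(1)] q i e by simp
      ultimately show ?thesis using e by simp
    qed
  qed
qed

lemma cyc_surj:
  assumes len: "length c = n" and dc: "distinct c" and sc: "set c = {1..n}" and c0: "c ! 0 = 1" and n: "1 \<le> n"
  shows "\<exists>p. cyclic_perm n p \<and> cycle_form n p = c"
proof -
  have cne: "c \<noteq> []" using len n by auto
  define c' where "c' = rotate1 c"
  have lc': "length c' = n" using len unfolding c'_def by simp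
  have c'n: "c' ! i = c ! (Suc i mod n)" if "i < n" for i
  proof -
    have ct: "c' = tl c @ [hd c]" unfolding c'_def using cne by (simp add: rotate1_hd_tl)
    show ?thesis
    proof (cases "Suc i < n")
      case True
      then show ?thesis using ct len cne by (auto simp: nth_append nth_tl)
    next
      case False
      then have "Suc i = n" using that by simp
      then show ?thesis using ct len cne c0 by (auto simp: nth_append hd_conv_nth)
    qed
  qed
  define p where "p x = (case map_of (zip c c') x of None \<Rightarrow> x | Some y \<Rightarrow> y)" for x
  have pc: "p (c ! i) = c' ! i" if "i < n" for i
    unfolding p_def using map_of_zip_nth[of c c' i] len lc' dc that by simp
  have pout: "p x = x" if "x \<notin> set c" for x
  proof -
    have "fst ` set (zip c c') = set c" using len lc' by (metis map_fst_zip set_map)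
    then have "map_of (zip c c') x = None" using that by (simp add: map_of_eq_None_iff)
    then show ?thesis unfolding p_def by simp
  qed
  have dc': "distinct c'" using dc unfolding c'_def by simp
  have bij: "bij_betw p (set c) (set c)"
  proof (rule bij_betw_imageI)
    show "inj_on p (set c)"
    proof (rule inj_onI)
      fix x y assume "x \<in> set c" "y \<in> set c" "p x = p y"
      then obtain i j where "i < n" "j < n" "c ! i = x" "c ! j = y" "p x = p y"
        using len by (auto simp: in_set_conv_nth)
      then show "x = y" using pc dc' lc' by (metis nth_eq_iff_index_eq)
    qed
    have "p ` set c = set c'"
    proof -
      have e1: "set c = nth c ` {0..<n}" using len by (metis map_nth set_map set_upt)
      have e2: "set c' = nth c' ` {0..<n}" using lc' by (metis map_nth set_map set_upt)
      have "p ` (nth c ` {0..<n}) = (p \<circ> nth c) ` {0..<n}" by (simp add: image_comp)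
      also have "\<dots> = nth c' ` {0..<n}"
      proof (rule image_cong)
        show "{0..<n} = {0..<n}" by (rule refl)
        fix x assume "x \<in> {0..<n}"
        then show "(p \<circ> nth c) x = c' ! x" using pc by simp
      qed
      finally show ?thesis using e1 e2 by simp
    qed
    then show "p ` set c = set c" unfolding c'_def by simp
  qed
  have "p permutes set c" by (rule bij_imp_permutes[OF bij pout])
  then have perm: "p permutes {1..n}" using sc by simp
  have orb: "(p ^^ i) 1 = c ! i" if "i < n" for i
    using that
  proof (induction i)
    case 0 then show ?case using c0 by simp
  next
    case (Suc i)
    then have "(p ^^ Suc i) 1 = p (c ! i)" by simp
    also have "\<dots> = c ! Suc i" using pc[of i] c'n[of i] Suc.prems by simp
    finally show ?case .
  qed
  have cyc: "cyclic_perm n p"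
    unfolding cyclic_perm_def
  proof (intro conjI perm subsetI)
    fix x assume "x \<in> {1..n}"
    then have "x \<in> set c" using sc by simp
    then obtain i where "i < n" "c ! i = x" using len by (auto simp: in_set_conv_nth)
    then have "(p ^^ i) 1 = x" using orb by simp
    then show "x \<in> {(p ^^ i) 1 | i. True}" by blast
  qed
  have "cycle_form n p = c"
    unfolding cycle_form_def using orb len by (intro nth_equalityI) auto
  with cyc show ?thesis by blast
qed

lemma graph_G:
  assumes cp: "cyclic_perm n p" and n: "1 \<le> n" and c: "cycle_form n p = 1 # w"
  shows "(a,b) \<in> G 1 w 1 \<longleftrightarrow> a \<in> {1..n} \<and> b = p a"
proof -
  let ?c = "cycle_form n p"
  have len: "length ?c = n" and sc: "set ?c = {1..n}" and c0: "?c ! 0 = 1"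
    and pc: "\<And>i. i < n \<Longrightarrow> p (?c ! i) = ?c ! (Suc i mod n)"
    using cyc_props[OF cp n] by auto
  have lw: "length w = n - 1" using len c by simp
  have wi: "(w @ [1]) ! i = p (?c ! i)" if "i < n" for i
  proof (cases "Suc i < n")
    case True
    then have "i < length w" using lw by simp
    then have "(w @ [1]) ! i = w ! i" by (simp add: nth_append)
    also have "\<dots> = ?c ! Suc i" using c by simp
    finally show ?thesis using pc[OF that] True by simp
  next
    case False
    then have si: "Suc i = n" using that by simp
    then have "i = length w" using lw by simp
    then have "(w @ [1]) ! i = 1" by simp
    then show ?thesis using pc[OF that] si c0 by simp
  qed
  have GG: "G 1 w 1 = set (zip ?c (w @ [1]))" unfolding G_def using c by simp
  have lw1: "length (w @ [1]) = n" using lw n by simp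
  have "G 1 w 1 = {(?c ! i, (w @ [1]) ! i) | i. i < n}" unfolding GG set_zip using len lw1 by simp
  also have "\<dots> = {(?c ! i, p (?c ! i)) | i. i < n}" using wi by auto
  finally have G2: "G 1 w 1 = {(?c ! i, p (?c ! i)) | i. i < n}" .
  show ?thesis
  proof
    assume "(a,b) \<in> G 1 w 1"
    then obtain i where i: "i < n" "a = ?c ! i" "b = p a" using G2 by auto
    then have "a \<in> set ?c" using len by simp
    then show "a \<in> {1..n} \<and> b = p a" using sc i by simp
  next
    assume h: "a \<in> {1..n} \<and> b = p a"
    then have "a \<in> set ?c" using sc by simp
    then obtain i where "i < n" "?c ! i = a" using len by (auto simp: in_set_conv_nth)
    then show "(a,b) \<in> G 1 w 1" unfolding G2 using h by blast
  qed
qed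

lemma one_line_nth: "i < n \<Longrightarrow> one_line n p ! i = p (Suc i)"
  unfolding one_line_def by (simp del: upt_Suc)

lemma one_line_len: "length (one_line n p) = n"
  unfolding one_line_def by simp

lemma delta3_iff:
  assumes cp: "cyclic_perm n p" and n: "1 \<le> n" and c: "cycle_form n p = 1 # w"
  shows "contains_pat (one_line n p) (delta 3) \<longleftrightarrow> dec3 (G 1 w 1)"
proof
  assume "contains_pat (one_line n p) (delta 3)"
  then obtain i1 i2 i3 where h: "i1 < i2" "i2 < i3" "i3 < n"
    "one_line n p ! i2 < one_line n p ! i1" "one_line n p ! i3 < one_line n p ! i2"
    unfolding contains_delta3 one_line_len by blast
  have P: "(Suc i, p (Suc i)) \<in> G 1 w 1" if "i < n" for i using graph_G[OF cp n c] that by simp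
  show "dec3 (G 1 w 1)" unfolding dec3_def
    apply (rule exI[of _ "Suc i1"], rule exI[of _ "p (Suc i1)"], rule exI[of _ "Suc i2"], rule exI[of _ "p (Suc i2)"],
        rule exI[of _ "Suc i3"], rule exI[of _ "p (Suc i3)"])
    using h P[of i1] P[of i2] P[of i3] one_line_nth[of i1 n p] one_line_nth[of i2 n p] one_line_nth[of i3 n p]
    by simp
next
  assume "dec3 (G 1 w 1)"
  then obtain a1 b1 a2 b2 a3 b3 where P: "(a1,b1) \<in> G 1 w 1" "(a2,b2) \<in> G 1 w 1" "(a3,b3) \<in> G 1 w 1"
    and o: "a1 < a2" "a2 < a3" "b2 < b1" "b3 < b2" unfolding dec3_def by blast
  have q: "a1 \<in> {1..n} \<and> b1 = p a1" "a2 \<in> {1..n} \<and> b2 = p a2" "a3 \<in> {1..n} \<and> b3 = p a3"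
    using P graph_G[OF cp n c] by blast+
  have e: "one_line n p ! (a - 1) = p a" if "a \<in> {1..n}" for a
  proof -
    have "a - 1 < n" using that by auto
    then show ?thesis using one_line_nth[of "a - 1" n p] that by simp
  qed
  show "contains_pat (one_line n p) (delta 3)" unfolding contains_delta3 one_line_len
    apply (rule exI[of _ "a1 - 1"], rule exI[of _ "a2 - 1"], rule exI[of _ "a3 - 1"])
    using q o e[of a1] e[of a2] e[of a3] by auto
qed

lemma delta4_imp:
  assumes cp: "cyclic_perm n p" and n: "1 \<le> n" and c: "cycle_form n p = 1 # w"
    and con: "contains_pat (one_line n p) (delta k)" and k: "4 \<le> k"
  shows "dec4 (G 1 w 1)"
proof -
  obtain i1 i2 i3 i4 where h: "i1 < i2" "i2 < i3" "i3 < i4" "i4 < n"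
    "one_line n p ! i2 < one_line n p ! i1" "one_line n p ! i3 < one_line n p ! i2"
    "one_line n p ! i4 < one_line n p ! i3"
    using contains_delta_dec4[OF con k] unfolding one_line_len by blast
  have P: "(Suc i, p (Suc i)) \<in> G 1 w 1" if "i < n" for i using graph_G[OF cp n c] that by simp
  show "dec4 (G 1 w 1)" unfolding dec4_def
    apply (rule exI[of _ "Suc i1"], rule exI[of _ "p (Suc i1)"], rule exI[of _ "Suc i2"], rule exI[of _ "p (Suc i2)"],
        rule exI[of _ "Suc i3"], rule exI[of _ "p (Suc i3)"], rule exI[of _ "Suc i4"], rule exI[of _ "p (Suc i4)"])
    using h P[of i1] P[of i2] P[of i3] P[of i4]
      one_line_nth[of i1 n p] one_line_nth[of i2 n p] one_line_nth[of i3 n p] one_line_nth[of i4 n p]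
    by simp
qed

lemma cyc_w:
  assumes cp: "cyclic_perm n p" and n: "1 \<le> n"
  shows "cycle_form n p = 1 # tl (cycle_form n p)" "distinct (tl (cycle_form n p))"
    "set (tl (cycle_form n p)) = {2..<2 + (n - 1)}"
proof -
  let ?c = "cycle_form n p"
  have len: "length ?c = n" and dc: "distinct ?c" and sc: "set ?c = {1..n}" and c0: "?c ! 0 = 1"
    using cyc_props[OF cp n] by auto
  have ne: "?c \<noteq> []" using len n by auto
  show e: "?c = 1 # tl ?c" using ne c0 by (cases ?c) auto
  show "distinct (tl ?c)" using dc by (simp add: distinct_tl)
  have "set ?c = insert 1 (set (tl ?c))" using e by (metis list.simps(15))
  moreover have "1 \<notin> set (tl ?c)" using dc e by (metis distinct.simps(2))
  ultimately have "set (tl ?c) = {1..n} - {1}" using sc by auto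
  also have "\<dots> = {2..<2 + (n - 1)}" using n by auto
  finally show "set (tl (cycle_form n p)) = {2..<2 + (n - 1)}" .
qed

lemma rot_cond_iff:
  assumes cp: "cyclic_perm n p" and n: "1 \<le> n"
  shows "(\<forall>j < n. avoids (rotate j (cycle_form n p)) [1,3,2,4]) \<longleftrightarrow> tl (cycle_form n p) \<in> Vs 2 (n - 1)"
proof -
  let ?c = "cycle_form n p"
  let ?w = "tl ?c"
  have e: "?c = 1 # ?w" and dw: "distinct ?w" and sw: "set ?w = {2..<2 + (n - 1)}" using cyc_w[OF cp n] by auto
  have pos: "\<forall>x\<in>set ?w. 1 < x" using sw by auto
  have len: "length ?c = n" using cyc_props[OF cp n] by simp
  show ?thesis using rot_iff[OF e pos] len dw sw unfolding Vs_def by simp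
qed

lemma main_sets:
  assumes n: "1 \<le> n" and X: "X \<subseteq> Vs 2 (n - 1)"
    and Q: "\<And>p. cyclic_perm n p \<Longrightarrow> tl (cycle_form n p) \<in> Vs 2 (n - 1) \<Longrightarrow>
             (avoids (one_line n p) (delta k) \<longleftrightarrow> tl (cycle_form n p) \<in> X)"
  shows "card {p. cyclic_perm n p \<and> avoids (one_line n p) (delta k) \<and>
      (\<forall>j < n. avoids (rotate j (cycle_form n p)) [1,3,2,4])} = card X"
proof -
  let ?S = "{p. cyclic_perm n p \<and> avoids (one_line n p) (delta k) \<and>
      (\<forall>j < n. avoids (rotate j (cycle_form n p)) [1,3,2,4])}"
  have S: "?S = {p. cyclic_perm n p \<and> tl (cycle_form n p) \<in> X}"
  proof (intro Collect_cong iffI)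
    fix p assume "cyclic_perm n p \<and> avoids (one_line n p) (delta k) \<and>
      (\<forall>j < n. avoids (rotate j (cycle_form n p)) [1,3,2,4])"
    then show "cyclic_perm n p \<and> tl (cycle_form n p) \<in> X"
      using rot_cond_iff[OF _ n, of p] Q[of p] by blast
  next
    fix p assume h: "cyclic_perm n p \<and> tl (cycle_form n p) \<in> X"
    then have "tl (cycle_form n p) \<in> Vs 2 (n - 1)" using X by blast
    then show "cyclic_perm n p \<and> avoids (one_line n p) (delta k) \<and>
      (\<forall>j < n. avoids (rotate j (cycle_form n p)) [1,3,2,4])"
      using rot_cond_iff[OF _ n, of p] Q[of p] h by blast
  qed
  have inj: "inj_on (cycle_form n) ?S" using cyc_inj by (rule inj_on_subset) auto
  have img: "cycle_form n ` ?S = Cons 1 ` X"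
  proof
    show "cycle_form n ` ?S \<subseteq> Cons 1 ` X"
    proof
      fix c assume "c \<in> cycle_form n ` ?S"
      then obtain p where p: "p \<in> ?S" "c = cycle_form n p" by blast
      then have "cyclic_perm n p" "tl c \<in> X" using S by auto
      moreover have "c = 1 # tl c" using cyc_w(1)[OF \<open>cyclic_perm n p\<close> n] p(2) by simp
      ultimately show "c \<in> Cons 1 ` X" by (metis image_eqI)
    qed
    show "Cons 1 ` X \<subseteq> cycle_form n ` ?S"
    proof
      fix c assume "c \<in> Cons 1 ` X"
      then obtain w where w: "w \<in> X" "c = 1 # w" by blast
      have wV: "w \<in> Vs 2 (n - 1)" using w X by blast
      have sw: "set w = {2..<2 + (n - 1)}" and dw: "distinct w" using wV unfolding Vs_def by auto
      have lw: "length w = n - 1" using Vs_len[OF wV] .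
      have lc: "length c = n" using lw w n by simp
      have dc: "distinct c" using w dw sw by simp
      have sc: "set c = {1..n}" using w sw n by auto
      have c0: "c ! 0 = 1" using w by simp
      obtain p where p: "cyclic_perm n p" "cycle_form n p = c" using cyc_surj[OF lc dc sc c0 n] by blast
      then have "p \<in> ?S" using S w by simp
      then show "c \<in> cycle_form n ` ?S" using p by blast
    qed
  qed
  have "card ?S = card (cycle_form n ` ?S)" using card_image[OF inj] by simp
  also have "\<dots> = card (Cons 1 ` X)" using img by simp
  also have "\<dots> = card X" by (rule card_image) simp
  finally show ?thesis .
qed

theorem theorem3p1:
  fixes n :: nat
  assumes "n \<ge> 3"
  shows "a_circ n 3 = 2 ^ (n - 2) \<and> (\<forall>k \<ge> 4. a_circ n k = fib (2 * n - 3))"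
proof
  have n: "1 \<le> n" using assms by simp
  have "a_circ n 3 = card (Us 2 (n - 1))"
    unfolding a_circ_def
  proof (rule main_sets[OF n Us_sub])
    fix p assume cp: "cyclic_perm n p" and wV: "tl (cycle_form n p) \<in> Vs 2 (n - 1)"
    have e: "cycle_form n p = 1 # tl (cycle_form n p)" using cyc_w[OF cp n] by simp
    show "avoids (one_line n p) (delta 3) \<longleftrightarrow> tl (cycle_form n p) \<in> Us 2 (n - 1)"
      unfolding avoids_def delta3_iff[OF cp n e]
      using no_dec3_U[of "tl (cycle_form n p)" 2 "n - 1" 1 1] dec3_VU[OF wV, of 1 1] by auto
  qed
  also have "\<dots> = 2 ^ (n - 2)"
  proof -
    have "n - 1 = Suc (n - 2)" using assms by simp
    then show ?thesis using Us_card[of 2 "n - 2"] by simp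
  qed
  finally show "a_circ n 3 = 2 ^ (n - 2)" .
next
  have n: "1 \<le> n" using assms by simp
  show "\<forall>k \<ge> 4. a_circ n k = fib (2 * n - 3)"
  proof (intro allI impI)
    fix k :: nat assume k: "4 \<le> k"
    have "a_circ n k = card (Vs 2 (n - 1))"
      unfolding a_circ_def
    proof (rule main_sets[OF n subset_refl])
      fix p assume cp: "cyclic_perm n p" and wV: "tl (cycle_form n p) \<in> Vs 2 (n - 1)"
      have e: "cycle_form n p = 1 # tl (cycle_form n p)" using cyc_w[OF cp n] by simp
      have "\<not> contains_pat (one_line n p) (delta k)"
        using delta4_imp[OF cp n e _ k] no_dec4[OF wV, of 1 1] by auto
      then show "avoids (one_line n p) (delta k) \<longleftrightarrow> tl (cycle_form n p) \<in> Vs 2 (n - 1)"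
        unfolding avoids_def using wV by simp
    qed
    also have "\<dots> = fib (2 * (n - 1) - 1)" using Vs_card[of 2 "n - 1"] assms by simp
    also have "2 * (n - 1) - 1 = 2 * n - 3" using assms by simp
    finally show "a_circ n k = fib (2 * n - 3)" .
  qed
qed

end
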